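(* Let $z=(z_1,\dots,z_n)$ with $z_i$ i.i.d. from a continuous distribution on $\mathbb{R}$ with a density, let $J\le\sqrt{n}$, and let $Q(\tau,\mu,z)=-\sum_{i=1}^n\log\sum_{j=1}^J\tau_j\phi(z_i-\mu_j)$, where $\phi$ is the standard normal density. Consider the unrestricted parameter space $\mathcal{U}=\{(\tau,\mu)\in\mathbb{R}^J\times\mathbb{R}^J:\tau_j>0,\ \sum_j\tau_j=1\}$ (no ordering restriction on $\mu$). Then for almost every $z$ the following holds: if $(\tau^*,\mu^* )\in\mathcal{U}$ is a global minimizer of $Q(\cdot,\cdot,z)$ over $\mathcal{U}$, then the set of global minimizers of $Q(\cdot,\cdot,z)$ over $\mathcal{U}$ equals $$\Big\{(\varsigma^*,\nu^* )\in\mathcal{U}:\ \sum_{j=1}^J\varsigma_j^*\mathbf{1}\{\nu_j^*=\mu_k^*\}=\sum_{j=1}^J\tau_j^*\mathbf{1}\{\mu_j^*=\mu_k^*\}\ \text{for all }k=1,\dots,J\Big\}.$$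
   Context: $\phi$ is the standard normal density; $\mathbf{1}\{\cdot\}$ is the indicator function. *)

theory Defs
  imports "HOL-Probability.Probability"
begin

definition Qmix :: "nat \<Rightarrow> nat \<Rightarrow> (nat \<Rightarrow> real) \<Rightarrow> (nat \<Rightarrow> real) \<Rightarrow> (nat \<Rightarrow> real) \<Rightarrow> real" where
  "Qmix n J tau mu z =
     - (\<Sum>i<n. ln (\<Sum>j<J. tau j * std_normal_density (z i - mu j)))"

text \<open>Unrestricted parameter space U, a copy of a subset of R^J x R^J:
  parameters are functions on nat, extensional (zero) outside the indices 0..J-1.\<close>
definition param_space :: "nat \<Rightarrow> ((nat \<Rightarrow> real) \<times> (nat \<Rightarrow> real)) set" where
  "param_space J = {(tau, mu). (\<forall>j<J. tau j > 0) \<and> (\<Sum>j<J. tau j) = 1 \<and>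
                               (\<forall>j\<ge>J. tau j = 0 \<and> mu j = 0)}"

definition global_minimizers ::
  "nat \<Rightarrow> nat \<Rightarrow> (nat \<Rightarrow> real) \<Rightarrow> ((nat \<Rightarrow> real) \<times> (nat \<Rightarrow> real)) set" where
  "global_minimizers n J z =
     {(tau, mu) \<in> param_space J. \<forall>(s, v) \<in> param_space J. Qmix n J tau mu z \<le> Qmix n J s v z}"

end

theory Submission
  imports Defs
begin


lemma rolle_count:
  fixes h h' :: "real \<Rightarrow> real"
  assumes der: "\<And>x. (h has_real_derivative h' x) (at x)"
    and fin: "finite Z"
  shows "(\<forall>z\<in>Z. h z = 0) \<longrightarrow> (\<exists>Z'. finite Z' \<and> card Z + 1 \<le> card Z' + 2 \<and> (\<forall>x\<in>Z'. h' x = 0)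
          \<and> (\<forall>x\<in>Z'. \<exists>z\<in>Z. x < z))"
  using fin
proof (induction Z rule: finite_linorder_max_induct)
  case empty
  then show ?case by (intro impI exI[of _ "{}"]) auto
next
  case (insert b A)
  show ?case
  proof
    assume z: "\<forall>z\<in>insert b A. h z = 0"
    show "\<exists>Z'. finite Z' \<and> card (insert b A) + 1 \<le> card Z' + 2 \<and> (\<forall>x\<in>Z'. h' x = 0)
          \<and> (\<forall>x\<in>Z'. \<exists>z\<in>insert b A. x < z)"
    proof (cases "A = {}")
      case True
      then show ?thesis by (intro exI[of _ "{}"]) auto
    next
      case False
      from insert.IH z obtain Z0 where Z0: "finite Z0" "card A + 1 \<le> card Z0 + 2"
        "\<forall>x\<in>Z0. h' x = 0" "\<forall>x\<in>Z0. \<exists>z\<in>A. x < z" by auto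
      define a where "a = Max A"
      have aA: "a \<in> A" using False insert.hyps(1) a_def by simp
      have alt: "a < b" using aA insert.hyps(2) by auto
      have cont: "continuous_on {a..b} h"
        using der by (meson DERIV_continuous continuous_at_imp_continuous_on)
      obtain \<xi> where xi: "a < \<xi>" "\<xi> < b" "DERIV h \<xi> :> 0"
        using Rolle[OF alt _ cont] z aA der real_differentiable_def by fastforce
      have h'xi: "h' \<xi> = 0" using DERIV_unique[OF der xi(3)] .
      have notin: "\<xi> \<notin> Z0"
      proof
        assume "\<xi> \<in> Z0"
        then obtain z where "z \<in> A" "\<xi> < z" using Z0(4) by auto
        then have "z \<le> a" using a_def insert.hyps(1) by simp
        then show False using xi \<open>\<xi> < z\<close> by simp
      qed
      have "card A \<ge> 1" using False insert.hyps(1) by (simp add: Suc_leI card_gt_0_iff)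
      moreover have "card (insert b A) = card A + 1" using insert.hyps by (auto simp: card_insert_if)
      moreover have "card (insert \<xi> Z0) = card Z0 + 1" using notin Z0(1) by simp
      ultimately show ?thesis using Z0 xi h'xi
        by (intro exI[of _ "insert \<xi> Z0"]) force
    qed
  qed
qed

lemma expsum_zero_aux:
  "\<forall>B (c::real\<Rightarrow>real) (Z::real set). finite B \<and> card B = m \<and> finite Z \<and> card Z \<ge> m \<and>
     (\<forall>x\<in>Z. (\<Sum>b\<in>B. c b * exp (b * x)) = 0) \<longrightarrow> (\<forall>b\<in>B. c b = 0)"
proof (induction m)
  case 0
  then show ?case by auto
next
  case (Suc m)
  show ?case
  proof (intro allI impI)
    fix B c and Z :: "real set"
    assume H: "finite B \<and> card B = Suc m \<and> finite Z \<and> card Z \<ge> Suc m \<and>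
     (\<forall>x\<in>Z. (\<Sum>b\<in>B. c b * exp (b * x)) = 0)"
    then obtain \<beta> where \<beta>: "\<beta> \<in> B" by (metis card.empty ex_in_conv nat.distinct(1))
    define B1 where "B1 = B - {\<beta>}"
    have B: "B = insert \<beta> B1" "\<beta> \<notin> B1" "finite B1" using \<beta> H B1_def by auto
    have cB1: "card B1 = m" using B H by (metis card_insert_disjoint nat.inject)
    define h where "h x = c \<beta> + (\<Sum>b\<in>B1. c b * exp ((b - \<beta>) * x))" for x
    define h' where "h' x = (\<Sum>b\<in>B1. c b * (b - \<beta>) * exp ((b - \<beta>) * x))" for x
    have der: "(h has_real_derivative h' x) (at x)" for x
      unfolding h_def h'_def
      by (auto intro!: derivative_eq_intros DERIV_sum simp: algebra_simps)
    have hz: "\<forall>z\<in>Z. h z = 0"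
    proof
      fix z assume "z \<in> Z"
      then have "(\<Sum>b\<in>B. c b * exp (b * z)) = 0" using H by auto
      then have "exp (- \<beta> * z) * (\<Sum>b\<in>B. c b * exp (b * z)) = 0" by simp
      moreover have "exp (- \<beta> * z) * (\<Sum>b\<in>B. c b * exp (b * z)) = h z"
        unfolding h_def B(1) using B(2,3)
        by (simp add: sum_distrib_left algebra_simps flip: exp_add)
      ultimately show "h z = 0" by simp
    qed
    obtain Z0 where Z0: "finite Z0" "card Z + 1 \<le> card Z0 + 2" "\<forall>x\<in>Z0. h' x = 0"
      using rolle_count[OF der, of Z] H hz by blast
    define B2 where "B2 = (\<lambda>b. b - \<beta>) ` B1"
    define c2 where "c2 b = c (b + \<beta>) * b" for b
    have inj: "inj_on (\<lambda>b. b - \<beta>) B1" by (auto simp: inj_on_def)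
    have prem: "finite B2 \<and> card B2 = m \<and> finite Z0 \<and> card Z0 \<ge> m \<and>
     (\<forall>x\<in>Z0. (\<Sum>b\<in>B2. c2 b * exp (b * x)) = 0)"
    proof (intro conjI)
      show "finite B2" "card B2 = m" using B(3) cB1 inj by (auto simp: B2_def card_image)
      show "finite Z0" "m \<le> card Z0" using Z0 H by auto
      show "\<forall>x\<in>Z0. (\<Sum>b\<in>B2. c2 b * exp (b * x)) = 0"
      proof
        fix x assume "x \<in> Z0"
        have "(\<Sum>b\<in>B2. c2 b * exp (b * x)) = h' x"
          unfolding B2_def h'_def c2_def by (subst sum.reindex[OF inj]) (simp add: algebra_simps)
        then show "(\<Sum>b\<in>B2. c2 b * exp (b * x)) = 0" using Z0 \<open>x \<in> Z0\<close> by simp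
      qed
    qed
    have "\<forall>b\<in>B2. c2 b = 0" using Suc.IH prem by blast
    then have c1: "\<forall>b\<in>B1. c b = 0" using B unfolding B2_def c2_def by auto
    obtain z where "z \<in> Z" using H by fastforce
    then have "(\<Sum>b\<in>B. c b * exp (b * z)) = 0" using H by auto
    then have "c \<beta> * exp (\<beta> * z) = 0" using c1 B by simp
    then have "c \<beta> = 0" by simp
    then show "\<forall>b\<in>B. c b = 0" using c1 B by auto
  qed
qed

lemma expsum_zero:
  fixes c :: "real \<Rightarrow> real" and Z :: "real set"
  assumes "finite B" "finite Z" "card Z \<ge> card B"
    "\<And>x. x \<in> Z \<Longrightarrow> (\<Sum>b\<in>B. c b * exp (b * x)) = 0"
    "b \<in> B"
  shows "c b = 0"
  using expsum_zero_aux[of "card B"] assms by blast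



definition Af :: "nat \<Rightarrow> (nat \<Rightarrow> real) \<Rightarrow> (nat \<Rightarrow> real) \<Rightarrow> real \<Rightarrow> real" where
  "Af J tau mu x = (\<Sum>j<J. tau j * exp (mu j * x - (mu j)\<^sup>2 / 2))"
definition Ad :: "nat \<Rightarrow> (nat \<Rightarrow> real) \<Rightarrow> (nat \<Rightarrow> real) \<Rightarrow> real \<Rightarrow> real" where
  "Ad J tau mu x = (\<Sum>j<J. tau j * mu j * exp (mu j * x - (mu j)\<^sup>2 / 2))"
definition mass :: "nat \<Rightarrow> (nat \<Rightarrow> real) \<Rightarrow> (nat \<Rightarrow> real) \<Rightarrow> real \<Rightarrow> real" where
  "mass J tau mu b = (\<Sum>j<J. tau j * (if mu j = b then 1 else 0))"

lemma regroup:
  fixes f :: "'a \<Rightarrow> real" and g :: "real \<Rightarrow> real"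
  assumes "finite P" "finite B" "\<And>j. j \<in> P \<Longrightarrow> e j \<in> B"
  shows "(\<Sum>j\<in>P. f j * g (e j)) = (\<Sum>b\<in>B. (\<Sum>j\<in>P. f j * (if e j = b then 1 else 0)) * g b)"
proof -
  have "(\<Sum>b\<in>B. (\<Sum>j\<in>P. f j * (if e j = b then 1 else 0)) * g b)
      = (\<Sum>b\<in>B. \<Sum>j\<in>P. f j * (if e j = b then g b else 0))"
    by (auto simp: sum_distrib_right intro!: sum.cong)
  also have "\<dots> = (\<Sum>j\<in>P. \<Sum>b\<in>B. f j * (if e j = b then g b else 0))"
    by (rule sum.swap)
  also have "\<dots> = (\<Sum>j\<in>P. f j * g (e j))"
    using assms by (auto simp: sum_distrib_left[symmetric] intro!: sum.cong)
  finally show ?thesis by simp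
qed

lemma param_J_pos: "(tau, mu) \<in> param_space J \<Longrightarrow> 0 < J"
  by (cases J) (auto simp: param_space_def)

lemma Af_pos: assumes "(tau, mu) \<in> param_space J" shows "0 < Af J tau mu x"
proof -
  have "0 < J" using param_J_pos[OF assms] .
  then have "{..<J} \<noteq> {}" by auto
  then show ?thesis unfolding Af_def using assms
    by (intro sum_pos) (auto simp: param_space_def)
qed

lemma Af_der: "(Af J tau mu has_real_derivative Ad J tau mu x) (at x)"
  unfolding Af_def Ad_def
  by (auto intro!: derivative_eq_intros DERIV_sum simp: algebra_simps)

lemma sum_mass: "finite B \<Longrightarrow> (\<And>j. j < J \<Longrightarrow> mu j \<in> B) \<Longrightarrow> (\<Sum>b\<in>B. mass J tau mu b) = (\<Sum>j<J. tau j)"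
  using regroup[of "{..<J}" B mu tau "\<lambda>_. 1"] unfolding mass_def by simp

lemma identify:
  assumes P1: "(tau, mu) \<in> param_space J" and P2: "(s, v) \<in> param_space J"
    and Z: "finite Z" "card Z \<ge> J * J"
    and eq: "\<And>x. x \<in> Z \<Longrightarrow> Ad J tau mu x * Af J s v x = Af J tau mu x * Ad J s v x"
  shows "\<And>b. mass J s v b = mass J tau mu b"
proof -
  define P where "P = {..<J} \<times> {..<J}"
  define e where "e p = mu (fst p) + v (snd p)" for p
  define F where "F p = tau (fst p) * s (snd p) * (mu (fst p) - v (snd p)) *
     exp (- (mu (fst p))\<^sup>2 / 2 - (v (snd p))\<^sup>2 / 2)" for p
  define B where "B = e ` P"
  define C where "C b = (\<Sum>p\<in>P. F p * (if e p = b then 1 else 0))" for b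
  have finP: "finite P" "finite B" unfolding P_def B_def by auto
  have Eexp: "Ad J tau mu x * Af J s v x - Af J tau mu x * Ad J s v x
      = (\<Sum>b\<in>B. C b * exp (b * x))" for x
  proof -
    have "Ad J tau mu x * Af J s v x - Af J tau mu x * Ad J s v x
        = (\<Sum>p\<in>P. F p * exp (e p * x))"
      unfolding Ad_def Af_def P_def F_def e_def sum_product sum.cartesian_product
        sum_subtractf[symmetric]
      by (intro sum.cong refl) (auto simp: algebra_simps simp flip: exp_add)
    also have "\<dots> = (\<Sum>b\<in>B. C b * exp (b * x))"
      unfolding C_def using regroup[of P B e F "\<lambda>b. exp (b * x)"] finP B_def by auto
    finally show ?thesis .
  qed
  have cardB: "card B \<le> card Z"
    using card_image_le[of P e] Z unfolding B_def P_def by (auto simp: card_cartesian_product)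
  have C0: "C b = 0" if "b \<in> B" for b
  proof (rule expsum_zero[OF finP(2) Z(1) cardB _ that])
    fix x assume "x \<in> Z"
    then show "(\<Sum>b\<in>B. C b * exp (b * x)) = 0" using eq Eexp[of x] by simp
  qed
  have E0: "Ad J tau mu x * Af J s v x - Af J tau mu x * Ad J s v x = 0" for x
    using Eexp[of x] C0 by simp
  define c where "c = Af J tau mu 0 / Af J s v 0"
  have quot: "Af J tau mu x / Af J s v x = c" for x
  proof -
    have "\<forall>y. DERIV (\<lambda>x. Af J tau mu x / Af J s v x) y :> 0"
    proof
      fix y
      have "DERIV (\<lambda>x. Af J tau mu x / Af J s v x) y :>
        (Ad J tau mu y * Af J s v y - Af J tau mu y * Ad J s v y) / (Af J s v y * Af J s v y)"
        using Af_pos[OF P2, of y] by (intro DERIV_divide Af_der) auto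
      then show "DERIV (\<lambda>x. Af J tau mu x / Af J s v x) y :> 0" using E0[of y] by simp
    qed
    then show ?thesis unfolding c_def by (rule DERIV_isconst_all)
  qed
  have lin: "Af J tau mu x = c * Af J s v x" for x
    using quot[of x] Af_pos[OF P2, of x] by (simp add: field_simps)
  define B' where "B' = mu ` {..<J} \<union> v ` {..<J}"
  have finB': "finite B'" unfolding B'_def by auto
  define D where "D b = exp (- b\<^sup>2 / 2) * (mass J tau mu b - c * mass J s v b)" for b
  have Af_grp: "Af J t m x = (\<Sum>b\<in>B'. (exp (- b\<^sup>2 / 2) * mass J t m b) * exp (b * x))"
    if "\<And>j. j < J \<Longrightarrow> m j \<in> B'" for t m x
  proof -
    have "Af J t m x = (\<Sum>j<J. (t j * exp (- (m j)\<^sup>2 / 2)) * exp (m j * x))"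
      unfolding Af_def by (intro sum.cong refl) (simp flip: exp_add add: algebra_simps)
    also have "\<dots> = (\<Sum>b\<in>B'. (\<Sum>j<J. (t j * exp (- (m j)\<^sup>2 / 2)) * (if m j = b then 1 else 0)) * exp (b * x))"
      by (rule regroup) (use that finB' in auto)
    also have "\<dots> = (\<Sum>b\<in>B'. (exp (- b\<^sup>2 / 2) * mass J t m b) * exp (b * x))"
    proof (intro sum.cong refl)
      fix b
      have "(\<Sum>j<J. (t j * exp (- (m j)\<^sup>2 / 2)) * (if m j = b then 1 else 0)) = exp (- b\<^sup>2 / 2) * mass J t m b"
        unfolding mass_def sum_distrib_left by (intro sum.cong refl) auto
      then show "(\<Sum>j<J. (t j * exp (- (m j)\<^sup>2 / 2)) * (if m j = b then 1 else 0)) * exp (b * x) = (exp (- b\<^sup>2 / 2) * mass J t m b) * exp (b * x)"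
        by simp
    qed
    finally show ?thesis .
  qed
  have D0: "D b = 0" if "b \<in> B'" for b
  proof (rule expsum_zero[OF finB', where Z="real ` {..<2*J}" and c=D])
    show "finite (real ` {..<2 * J})" by auto
    have "card (real ` {..<2 * J}) = 2 * J" by (simp add: card_image)
    moreover have "card B' \<le> 2 * J" unfolding B'_def
      using card_Un_le[of "mu ` {..<J}" "v ` {..<J}"] card_image_le[of "{..<J}" mu]
        card_image_le[of "{..<J}" v] by simp
    ultimately show "card B' \<le> card (real ` {..<2 * J})" by simp
    fix x assume "x \<in> real ` {..<2*J}"
    have "0 = Af J tau mu x - c * Af J s v x" using lin by simp
    also have "\<dots> = (\<Sum>b\<in>B'. D b * exp (b * x))"
    proof -
      have g1: "Af J tau mu x = (\<Sum>b\<in>B'. (exp (- b\<^sup>2 / 2) * mass J tau mu b) * exp (b * x))"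
        by (rule Af_grp) (auto simp: B'_def)
      have g2: "Af J s v x = (\<Sum>b\<in>B'. (exp (- b\<^sup>2 / 2) * mass J s v b) * exp (b * x))"
        by (rule Af_grp) (auto simp: B'_def)
      show ?thesis unfolding g1 g2 D_def
        by (auto simp: sum_distrib_left sum_subtractf[symmetric] algebra_simps intro!: sum.cong)
    qed
    finally show "(\<Sum>b\<in>B'. D b * exp (b * x)) = 0" by simp
  qed (fact that)
  have meq: "mass J tau mu b = c * mass J s v b" if "b \<in> B'" for b
    using D0[OF that] unfolding D_def by simp
  have "1 = (\<Sum>b\<in>B'. mass J tau mu b)"
    using sum_mass[OF finB', of J mu tau] P1 by (auto simp: B'_def param_space_def)
  also have "\<dots> = c * (\<Sum>b\<in>B'. mass J s v b)"
    using meq by (simp add: sum_distrib_left)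
  also have "(\<Sum>b\<in>B'. mass J s v b) = 1"
    using sum_mass[OF finB', of J v s] P2 by (auto simp: B'_def param_space_def)
  finally have c1: "c = 1" by simp
  show "mass J s v b = mass J tau mu b" for b
  proof (cases "b \<in> B'")
    case True then show ?thesis using meq c1 by simp
  next
    case False
    then have "mass J s v b = 0" "mass J tau mu b = 0" unfolding mass_def B'_def
      by (auto intro!: sum.neutral)
    then show ?thesis by simp
  qed
qed



definition Lf :: "nat \<Rightarrow> nat \<Rightarrow> (nat \<Rightarrow> real) \<Rightarrow> (nat \<Rightarrow> real) \<Rightarrow> (nat \<Rightarrow> real) \<Rightarrow> real" where
  "Lf n J tau mu z = (\<Sum>i<n. ln (Af J tau mu (z i)))"
definition Wf :: "nat \<Rightarrow> nat \<Rightarrow> (nat \<Rightarrow> real) \<Rightarrow> real" where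
  "Wf n J z = Sup ((\<lambda>(t, m). Lf n J t m z) ` param_space J)"

lemma Af_le: assumes "(tau, mu) \<in> param_space J" shows "Af J tau mu x \<le> exp (x\<^sup>2 / 2)"
proof -
  have "Af J tau mu x \<le> (\<Sum>j<J. tau j * exp (x\<^sup>2 / 2))"
    unfolding Af_def
  proof (intro sum_mono mult_left_mono)
    fix j assume "j \<in> {..<J}"
    show "0 \<le> tau j" using assms \<open>j \<in> {..<J}\<close> by (auto simp: param_space_def less_imp_le)
    have "mu j * x - (mu j)\<^sup>2 / 2 \<le> x\<^sup>2 / 2"
      using sum_squares_ge_zero[of "mu j - x" 0] by (simp add: power2_eq_square algebra_simps)
    then show "exp (mu j * x - (mu j)\<^sup>2 / 2) \<le> exp (x\<^sup>2 / 2)" by simp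
  qed
  also have "\<dots> = exp (x\<^sup>2 / 2)" using assms by (simp add: param_space_def sum_distrib_right[symmetric])
  finally show ?thesis .
qed

lemma Lf_le: assumes "(tau, mu) \<in> param_space J" shows "Lf n J tau mu z \<le> (\<Sum>i<n. (z i)\<^sup>2 / 2)"
  unfolding Lf_def
proof (intro sum_mono)
  fix i
  have "ln (Af J tau mu (z i)) \<le> ln (exp ((z i)\<^sup>2 / 2))"
    using Af_le[OF assms] Af_pos[OF assms] by (subst ln_le_cancel_iff) auto
  then show "ln (Af J tau mu (z i)) \<le> (z i)\<^sup>2 / 2" by simp
qed

lemma bdd_L: "bdd_above ((\<lambda>(t, m). Lf n J t m z) ` param_space J)"
  by (rule bdd_aboveI[of _ "\<Sum>i<n. (z i)\<^sup>2 / 2"]) (auto intro: Lf_le)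

lemma Lf_le_W: "(t, m) \<in> param_space J \<Longrightarrow> Lf n J t m z \<le> Wf n J z"
  unfolding Wf_def by (rule cSup_upper[OF _ bdd_L]) force

lemma W_le: "param_space J \<noteq> {} \<Longrightarrow> (\<And>t m. (t, m) \<in> param_space J \<Longrightarrow> Lf n J t m z \<le> c) \<Longrightarrow> Wf n J z \<le> c"
  unfolding Wf_def by (rule cSup_least) auto

lemma mix_eq: "(\<Sum>j<J. tau j * std_normal_density (x - mu j)) = std_normal_density x * Af J tau mu x"
  unfolding Af_def sum_distrib_left
proof (intro sum.cong refl)
  fix j
  have e: "- (x - mu j)\<^sup>2 / 2 = - x\<^sup>2 / 2 + (mu j * x - (mu j)\<^sup>2 / 2)"
    by (simp add: power2_eq_square field_simps)
  show "tau j * std_normal_density (x - mu j) = std_normal_density x * (tau j * exp (mu j * x - (mu j)\<^sup>2 / 2))"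
    unfolding std_normal_density_def e exp_add by simp
qed

lemma Qmix_eq: assumes "(tau, mu) \<in> param_space J"
  shows "Qmix n J tau mu z = - (\<Sum>i<n. ln (std_normal_density (z i))) - Lf n J tau mu z"
proof -
  have "Qmix n J tau mu z = - (\<Sum>i<n. ln (std_normal_density (z i)) + ln (Af J tau mu (z i)))"
    unfolding Qmix_def mix_eq using Af_pos[OF assms]
    by (intro arg_cong[where f=uminus] sum.cong refl ln_mult_pos) (auto simp: normal_density_pos)
  then show ?thesis by (simp add: Lf_def sum.distrib)
qed

lemma minimizer_iff: "(tau, mu) \<in> global_minimizers n J z \<longleftrightarrow>
   (tau, mu) \<in> param_space J \<and> (\<forall>(s, v) \<in> param_space J. Lf n J s v z \<le> Lf n J tau mu z)"
proof -
  have eq: "Qmix n J tau mu z \<le> Qmix n J s v z \<longleftrightarrow> Lf n J s v z \<le> Lf n J tau mu z"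
    if "(tau, mu) \<in> param_space J" "(s, v) \<in> param_space J" for s v
    using that by (simp add: Qmix_eq)
  show ?thesis
  proof
    assume "(tau, mu) \<in> global_minimizers n J z"
    then have P: "(tau, mu) \<in> param_space J"
      and le: "\<And>s v. (s, v) \<in> param_space J \<Longrightarrow> Qmix n J tau mu z \<le> Qmix n J s v z"
      unfolding global_minimizers_def by auto
    show "(tau, mu) \<in> param_space J \<and> (\<forall>(s, v) \<in> param_space J. Lf n J s v z \<le> Lf n J tau mu z)"
      using P le eq by auto
  next
    assume H: "(tau, mu) \<in> param_space J \<and> (\<forall>(s, v) \<in> param_space J. Lf n J s v z \<le> Lf n J tau mu z)"
    then have P: "(tau, mu) \<in> param_space J"
      and le: "\<And>s v. (s, v) \<in> param_space J \<Longrightarrow> Lf n J s v z \<le> Lf n J tau mu z" by auto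
    show "(tau, mu) \<in> global_minimizers n J z"
      unfolding global_minimizers_def using P le eq by auto
  qed
qed

lemma max_W: assumes "(tau, mu) \<in> global_minimizers n J z" shows "Wf n J z = Lf n J tau mu z"
proof -
  have P: "(tau, mu) \<in> param_space J" and le: "\<forall>(s, v) \<in> param_space J. Lf n J s v z \<le> Lf n J tau mu z"
    using assms minimizer_iff by auto
  have ne: "param_space J \<noteq> {}" using P by blast
  have "Wf n J z \<le> Lf n J tau mu z"
    using le by (intro W_le[OF ne]) auto
  then show ?thesis using Lf_le_W[OF P, of n z] by simp
qed

lemma tangent: assumes "(tau, mu) \<in> param_space J"
  shows "ln (Af J tau mu y) + Ad J tau mu y / Af J tau mu y * (x - y) \<le> ln (Af J tau mu x)"
proof -
  define A where "A = Af J tau mu y"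
  define s where "s = Ad J tau mu y / A"
  define d where "d = x - y"
  have Ap: "0 < A" using Af_pos[OF assms] A_def by simp
  define w where "w j = tau j * exp (mu j * y - (mu j)\<^sup>2 / 2)" for j
  have w0: "j < J \<Longrightarrow> 0 \<le> w j" for j using assms by (auto simp: w_def param_space_def less_imp_le)
  have "Af J tau mu x = (\<Sum>j<J. w j * exp (mu j * d))"
    unfolding Af_def w_def d_def by (intro sum.cong refl) (simp add: algebra_simps flip: exp_add)
  also have "\<dots> \<ge> (\<Sum>j<J. w j * (exp (s * d) * (1 + (mu j - s) * d)))"
  proof (intro sum_mono mult_left_mono)
    fix j assume "j \<in> {..<J}"
    then show "0 \<le> w j" using w0 by auto
    have "exp (mu j * d) = exp (s * d) * exp ((mu j - s) * d)" by (simp add: algebra_simps flip: exp_add)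
    also have "\<dots> \<ge> exp (s * d) * (1 + (mu j - s) * d)"
      by (intro mult_left_mono exp_ge_add_one_self) auto
    finally show "exp (s * d) * (1 + (mu j - s) * d) \<le> exp (mu j * d)" .
  qed
  also have "(\<Sum>j<J. w j * (exp (s * d) * (1 + (mu j - s) * d))) =
      exp (s * d) * ((\<Sum>j<J. w j) + d * ((\<Sum>j<J. w j * mu j) - s * (\<Sum>j<J. w j)))"
    by (simp add: sum_distrib_left sum_distrib_right sum.distrib sum_subtractf algebra_simps)
  also have "(\<Sum>j<J. w j) = A" unfolding A_def Af_def w_def ..
  also have "(\<Sum>j<J. w j * mu j) = s * A" unfolding s_def using Ap
    by (simp add: Ad_def w_def algebra_simps)
  finally have "exp (s * d) * A \<le> Af J tau mu x" by simp
  then have "ln (exp (s * d) * A) \<le> ln (Af J tau mu x)" using Ap Af_pos[OF assms, of x] by (subst ln_le_cancel_iff) auto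
  then show ?thesis using Ap Af_pos[OF assms, of x] by (simp add: ln_mult A_def s_def d_def algebra_simps)
qed

lemma Lf_upd: assumes "i < n"
  shows "Lf n J t m (z(i:=x)) = (\<Sum>l\<in>{..<n}-{i}. ln (Af J t m (z l))) + ln (Af J t m x)"
proof -
  have "Lf n J t m (z(i:=x)) = ln (Af J t m ((z(i:=x)) i)) + (\<Sum>l\<in>{..<n}-{i}. ln (Af J t m ((z(i:=x)) l)))"
    unfolding Lf_def using assms by (subst sum.remove[of _ i]) auto
  also have "(\<Sum>l\<in>{..<n}-{i}. ln (Af J t m ((z(i:=x)) l))) = (\<Sum>l\<in>{..<n}-{i}. ln (Af J t m (z l)))"
    by (intro sum.cong) auto
  finally show ?thesis by (simp only: fun_upd_same add.commute)
qed

lemma score_sub: assumes "(tau, mu) \<in> global_minimizers n J z" "i < n"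
  shows "Wf n J z + Ad J tau mu (z i) / Af J tau mu (z i) * (x - z i) \<le> Wf n J (z(i:=x))"
proof -
  have P: "(tau, mu) \<in> param_space J" using assms minimizer_iff by auto
  have zz: "z(i := z i) = z" by simp
  have "Wf n J z = Lf n J tau mu z" using max_W[OF assms(1)] .
  also have "\<dots> = (\<Sum>l\<in>{..<n}-{i}. ln (Af J tau mu (z l))) + ln (Af J tau mu (z i))"
    using Lf_upd[OF assms(2), of J tau mu z "z i"] zz by simp
  finally have "Wf n J z + Ad J tau mu (z i) / Af J tau mu (z i) * (x - z i) \<le> Lf n J tau mu (z(i:=x))"
    using tangent[OF P, of "z i" x] Lf_upd[OF assms(2), of J tau mu z x] by simp
  also have "\<dots> \<le> Wf n J (z(i:=x))" by (rule Lf_le_W[OF P])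
  finally show ?thesis .
qed

lemma ln_Af_convex: assumes "(t, m) \<in> param_space J" "y0 < r" "r < y1"
  shows "(y1 - y0) * ln (Af J t m r) \<le> (y1 - r) * ln (Af J t m y0) + (r - y0) * ln (Af J t m y1)"
proof -
  define s where "s = Ad J t m r / Af J t m r"
  have a: "ln (Af J t m r) + s * (y0 - r) \<le> ln (Af J t m y0)" using tangent[OF assms(1)] s_def by simp
  have b: "ln (Af J t m r) + s * (y1 - r) \<le> ln (Af J t m y1)" using tangent[OF assms(1)] s_def by simp
  have "(y1 - r) * (ln (Af J t m r) + s * (y0 - r)) + (r - y0) * (ln (Af J t m r) + s * (y1 - r))
        \<le> (y1 - r) * ln (Af J t m y0) + (r - y0) * ln (Af J t m y1)"
    using a b assms by (intro add_mono mult_left_mono) auto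
  moreover have "(y1 - r) * (ln (Af J t m r) + s * (y0 - r)) + (r - y0) * (ln (Af J t m r) + s * (y1 - r))
      = (y1 - y0) * ln (Af J t m r)" by (simp add: algebra_simps)
  ultimately show ?thesis by simp
qed

lemma W_convex: assumes "i < n" "y0 < r" "r < y1" "param_space J \<noteq> {}"
  shows "(y1 - y0) * Wf n J (z(i:=r)) \<le> (y1 - r) * Wf n J (z(i:=y0)) + (r - y0) * Wf n J (z(i:=y1))"
proof -
  have "Wf n J (z(i:=r)) \<le> ((y1 - r) * Wf n J (z(i:=y0)) + (r - y0) * Wf n J (z(i:=y1))) / (y1 - y0)"
  proof (rule W_le[OF assms(4)])
    fix t m assume P: "(t, m) \<in> param_space J"
    define C where "C = (\<Sum>l\<in>{..<n}-{i}. ln (Af J t m (z l)))"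
    have "(y1 - y0) * Lf n J t m (z(i:=r)) = (y1 - r) * C + (r - y0) * C + (y1 - y0) * ln (Af J t m r)"
      unfolding Lf_upd[OF assms(1)] C_def by (simp add: algebra_simps)
    also have "\<dots> \<le> (y1 - r) * C + (r - y0) * C + ((y1 - r) * ln (Af J t m y0) + (r - y0) * ln (Af J t m y1))"
      using ln_Af_convex[OF P assms(2,3)] by simp
    also have "\<dots> = (y1 - r) * Lf n J t m (z(i:=y0)) + (r - y0) * Lf n J t m (z(i:=y1))"
      unfolding Lf_upd[OF assms(1)] C_def by (simp add: algebra_simps)
    also have "\<dots> \<le> (y1 - r) * Wf n J (z(i:=y0)) + (r - y0) * Wf n J (z(i:=y1))"
      using assms by (intro add_mono mult_left_mono Lf_le_W[OF P]) auto
    finally show "Lf n J t m (z(i:=r)) \<le> ((y1 - r) * Wf n J (z(i:=y0)) + (r - y0) * Wf n J (z(i:=y1))) / (y1 - y0)"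
      using assms by (simp add: field_simps)
  qed
  then show ?thesis using assms by (simp add: field_simps)
qed

definition Mi :: "nat \<Rightarrow> nat \<Rightarrow> nat \<Rightarrow> (nat \<Rightarrow> real) \<Rightarrow> bool" where
  "Mi n J i z = (\<exists>q1 q2 :: rat. q1 < q2 \<and> (\<forall>r :: rat.
     Wf n J z + of_rat q1 * (of_rat r - z i) \<le> Wf n J (z(i:=of_rat r)) \<and>
     Wf n J z + of_rat q2 * (of_rat r - z i) \<le> Wf n J (z(i:=of_rat r))))"

lemma slice_countable: assumes "i < n" "param_space J \<noteq> {}"
  shows "countable {y. Mi n J i (z(i:=y))}"
proof -
  define g where "g y = Wf n J (z(i:=y))" for y
  define T where "T q = {y. \<forall>r :: rat. g y + of_rat (fst q) * (of_rat r - y) \<le> g (of_rat r) \<and>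
      g y + of_rat (snd q) * (of_rat r - y) \<le> g (of_rat r)}" for q :: "rat \<times> rat"
  have sub: "{y. Mi n J i (z(i:=y))} \<subseteq> (\<Union>q\<in>{q. fst q < snd q}. T q)"
  proof
    fix y assume "y \<in> {y. Mi n J i (z(i:=y))}"
    then obtain q1 q2 :: rat where q: "q1 < q2" "\<forall>r::rat. Wf n J (z(i:=y)) + of_rat q1 * (of_rat r - y) \<le> Wf n J (z(i:=of_rat r)) \<and>
        Wf n J (z(i:=y)) + of_rat q2 * (of_rat r - y) \<le> Wf n J (z(i:=of_rat r))"
      unfolding Mi_def by auto
    have "y \<in> T (q1, q2)" unfolding T_def g_def using q(2) by simp
    then show "y \<in> (\<Union>q\<in>{q. fst q < snd q}. T q)" using q(1) by auto
  qed
  have one: "a = b" if q: "fst q < snd q" and ab: "a \<in> T q" "b \<in> T q" for q a b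
  proof (rule ccontr)
    have key: False if yy: "y0 < y1" "y0 \<in> T q" "y1 \<in> T q" for y0 y1
    proof -
      obtain r where r: "r \<in> \<rat>" "y0 < r" "r < y1" using Rats_dense_in_real[OF yy(1)] by blast
      then obtain rr where rr: "r = of_rat rr" by (auto elim: Rats_cases)
      have c: "(y1 - y0) * g r \<le> (y1 - r) * g y0 + (r - y0) * g y1"
        unfolding g_def using W_convex[OF assms(1) r(2,3) assms(2)] by simp
      have h1: "g y0 + of_rat (snd q) * (r - y0) \<le> g r" using yy(2) rr unfolding T_def by auto
      have h2: "g y1 + of_rat (fst q) * (r - y1) \<le> g r" using yy(3) rr unfolding T_def by auto
      define a where "a = r - y0"
      define b where "b = y1 - r"
      have a0: "a > 0" "b > 0" using r a_def b_def by auto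
      have "b * (of_rat (snd q) * a) \<le> b * (g r - g y0)" using h1 a0 a_def by (intro mult_left_mono) auto
      also have "b * (g r - g y0) \<le> a * (g y1 - g r)"
      proof -
        have e: "y1 - y0 = a + b" "y1 - r = b" "r - y0 = a" using a_def b_def by auto
        have "(a + b) * g r \<le> b * g y0 + a * g y1" using c unfolding e by simp
        then show ?thesis by (simp add: algebra_simps)
      qed
      also have "a * (g y1 - g r) \<le> a * (of_rat (fst q) * b)" using h2 a0 b_def
        by (intro mult_left_mono) (auto simp: algebra_simps)
      finally have "a * b * of_rat (snd q) \<le> a * b * of_rat (fst q)" by (simp add: algebra_simps)
      then have "of_rat (snd q) \<le> (of_rat (fst q) :: real)" using a0 by simp
      then show False using q by (simp add: of_rat_less_eq)
    qed
    assume "a \<noteq> b"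
    then consider "a < b" | "b < a" by linarith
    then show False
    proof cases
      case 1 then show False using key ab by blast
    next
      case 2 then show False using key ab by blast
    qed
  qed
  have "countable (T q)" if "fst q < snd q" for q
  proof (cases "T q = {}")
    case False
    then obtain a where "a \<in> T q" by auto
    then have "T q = {a}" using one[OF that] by auto
    then show ?thesis by simp
  qed simp
  then have "countable (\<Union>q\<in>{q. fst q < snd q}. T q)" by (intro countable_UN) auto
  then show ?thesis by (rule countable_subset[OF sub])
qed

lemma kink: assumes m1: "(tau, mu) \<in> global_minimizers n J z" and m2: "(s, v) \<in> global_minimizers n J z"
  and i: "i < n"
  and ne: "Ad J tau mu (z i) / Af J tau mu (z i) \<noteq> Ad J s v (z i) / Af J s v (z i)"
  shows "Mi n J i z"
proof -
  define a where "a = Ad J tau mu (z i) / Af J tau mu (z i)"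
  define b where "b = Ad J s v (z i) / Af J s v (z i)"
  have sa: "Wf n J z + a * (x - z i) \<le> Wf n J (z(i:=x))" for x using score_sub[OF m1 i] a_def by simp
  have sb: "Wf n J z + b * (x - z i) \<le> Wf n J (z(i:=x))" for x using score_sub[OF m2 i] b_def by simp
  have gen: "Wf n J z + c * (x - z i) \<le> Wf n J (z(i:=x))" if "s1 \<le> c" "c \<le> s2"
    and h1: "\<And>x. Wf n J z + s1 * (x - z i) \<le> Wf n J (z(i:=x))"
    and h2: "\<And>x. Wf n J z + s2 * (x - z i) \<le> Wf n J (z(i:=x))" for c s1 s2 x
  proof (cases "x \<le> z i")
    case True
    then have "c * (x - z i) \<le> s1 * (x - z i)" using that by (intro mult_right_mono_neg) auto
    then show ?thesis using h1[of x] by simp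
  next
    case False
    then have "c * (x - z i) \<le> s2 * (x - z i)" using that by (intro mult_right_mono) auto
    then show ?thesis using h2[of x] by simp
  qed
  have main: "Mi n J i z" if lt: "s1 < s2"
    and h1: "\<And>x. Wf n J z + s1 * (x - z i) \<le> Wf n J (z(i:=x))"
    and h2: "\<And>x. Wf n J z + s2 * (x - z i) \<le> Wf n J (z(i:=x))" for s1 s2
  proof -
    obtain r1 where r1: "r1 \<in> \<rat>" "s1 < r1" "r1 < s2" using Rats_dense_in_real[OF lt] by auto
    obtain r2 where r2: "r2 \<in> \<rat>" "r1 < r2" "r2 < s2" using Rats_dense_in_real[OF r1(3)] by auto
    obtain q1 where q1: "r1 = of_rat q1" using r1 by (auto elim: Rats_cases)
    obtain q2 where q2: "r2 = of_rat q2" using r2 by (auto elim: Rats_cases)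
    have qq: "q1 < q2" using r2 q1 q2 by (simp add: of_rat_less)
    have g1: "Wf n J z + r1 * (x - z i) \<le> Wf n J (z(i:=x))" for x
      using r1 r2 by (intro gen[OF _ _ h1 h2]) auto
    have g2: "Wf n J z + r2 * (x - z i) \<le> Wf n J (z(i:=x))" for x
      using r1 r2 by (intro gen[OF _ _ h1 h2]) auto
    have "\<forall>r::rat. Wf n J z + of_rat q1 * (of_rat r - z i) \<le> Wf n J (z(i := of_rat r)) \<and>
       Wf n J z + of_rat q2 * (of_rat r - z i) \<le> Wf n J (z(i := of_rat r))"
      using g1 g2 q1 q2 by simp
    then show ?thesis unfolding Mi_def using qq by blast
  qed
  from ne have "a < b \<or> b < a" unfolding a_def b_def by linarith
  then show ?thesis
  proof
    assume "a < b" then show ?thesis by (rule main) (fact sa, fact sb)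
  next
    assume "b < a" then show ?thesis by (rule main) (fact sb, fact sa)
  qed
qed

lemma supset: assumes m1: "(tau, mu) \<in> global_minimizers n J z"
  and P: "(s, v) \<in> param_space J"
  and eqk: "\<forall>k<J. mass J s v (mu k) = mass J tau mu (mu k)"
  shows "(s, v) \<in> global_minimizers n J z"
proof -
  have P1: "(tau, mu) \<in> param_space J" using m1 minimizer_iff by auto
  define B where "B = mu ` {..<J}"
  have finB: "finite B" unfolding B_def by auto
  have "(\<Sum>b\<in>B. mass J s v b) = (\<Sum>b\<in>B. mass J tau mu b)"
    using eqk unfolding B_def by (intro sum.cong) auto
  also have "\<dots> = 1" using sum_mass[OF finB, of J mu tau] P1 by (auto simp: B_def param_space_def)
  finally have s1: "(\<Sum>b\<in>B. mass J s v b) = 1" .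
  have "(\<Sum>b\<in>B. mass J s v b) = (\<Sum>j<J. s j * (if v j \<in> B then 1 else 0))"
    unfolding mass_def by (subst sum.swap) (auto simp: sum_distrib_left[symmetric] finB intro!: sum.cong)
  then have "(\<Sum>j<J. s j * (1 - (if v j \<in> B then 1 else 0))) = 0"
    using s1 P by (simp add: param_space_def sum_subtractf algebra_simps)
  moreover have spos: "\<And>j. j < J \<Longrightarrow> 0 < s j" using P by (auto simp: param_space_def)
  moreover have nn: "\<And>j. j \<in> {..<J} \<Longrightarrow> 0 \<le> s j * (1 - (if v j \<in> B then 1 else 0))"
  proof -
    fix j assume "j \<in> {..<J}"
    then have "0 < s j" using spos by simp
    then show "0 \<le> s j * (1 - (if v j \<in> B then 1 else 0))" by simp
  qed
  moreover have "(\<Sum>j<J. s j * (1 - (if v j \<in> B then 1 else 0))) = 0 \<longleftrightarrow>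
     (\<forall>j\<in>{..<J}. s j * (1 - (if v j \<in> B then 1 else 0)) = 0)"
    by (rule sum_nonneg_eq_0_iff[OF _ nn]) auto
  ultimately have "\<forall>j\<in>{..<J}. s j * (1 - (if v j \<in> B then 1 else 0)) = 0"
    by simp
  then have vB: "\<And>j. j < J \<Longrightarrow> v j \<in> B" using P by (force simp: param_space_def split: if_splits)
  have mB: "\<And>b. b \<in> B \<Longrightarrow> mass J s v b = mass J tau mu b" using eqk B_def by auto
  have AfE: "Af J s v x = Af J tau mu x" for x
  proof -
    have grp: "Af J t m x = (\<Sum>b\<in>B. mass J t m b * exp (b * x - b\<^sup>2 / 2))"
      if "\<And>j. j < J \<Longrightarrow> m j \<in> B" for t m
      unfolding Af_def mass_def using regroup[of "{..<J}" B m t "\<lambda>b. exp (b * x - b\<^sup>2 / 2)"] that finB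
      by auto
    have g1: "Af J s v x = (\<Sum>b\<in>B. mass J s v b * exp (b * x - b\<^sup>2 / 2))"
      by (rule grp) (rule vB)
    have g2: "Af J tau mu x = (\<Sum>b\<in>B. mass J tau mu b * exp (b * x - b\<^sup>2 / 2))"
      by (rule grp) (simp add: B_def)
    show ?thesis unfolding g1 g2 using mB by (auto intro!: sum.cong)
  qed
  then have eqL: "Lf n J s v z = Lf n J tau mu z" unfolding Lf_def by simp
  have le: "\<forall>(a, b)\<in>param_space J. Lf n J a b z \<le> Lf n J tau mu z"
    using m1 unfolding minimizer_iff by blast
  show ?thesis unfolding minimizer_iff eqL using P le by blast
qed



lemma prob_N:
  assumes f_meas: "f \<in> borel_measurable lborel"
    and f_prob: "(\<integral>\<^sup>+ x. ennreal (f x) \<partial>lborel) = 1"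
  shows "prob_space (density lborel (\<lambda>x. ennreal (f x)))"
proof
  have "emeasure (density lborel (\<lambda>x. ennreal (f x))) UNIV = (\<integral>\<^sup>+ x. ennreal (f x) \<partial>lborel)"
    using f_meas by (subst emeasure_density) auto
  then show "emeasure (density lborel (\<lambda>x. ennreal (f x))) (space (density lborel (\<lambda>x. ennreal (f x)))) = 1"
    using f_prob by simp
qed

lemma psf_N:
  assumes "prob_space N"
  shows "product_sigma_finite (\<lambda>_. N)"
  unfolding product_sigma_finite_def using prob_space_imp_sigma_finite[OF assms] by simp

lemma null_slices:
  fixes n i :: nat
  assumes f_meas: "f \<in> borel_measurable lborel"
    and f_prob: "(\<integral>\<^sup>+ x. ennreal (f x) \<partial>lborel) = 1"
    and S: "S \<in> sets (PiM {..<n} (\<lambda>_. density lborel (\<lambda>x. ennreal (f x))))"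
    and i: "i < n"
    and cnt: "\<And>x. x \<in> space (PiM ({..<n}-{i}) (\<lambda>_. density lborel (\<lambda>x. ennreal (f x)))) \<Longrightarrow>
       countable {y. x(i:=y) \<in> S}"
  shows "emeasure (PiM {..<n} (\<lambda>_. density lborel (\<lambda>x. ennreal (f x)))) S = 0"
proof -
  define N where "N = density lborel (\<lambda>x. ennreal (f x))"
  interpret product_sigma_finite "\<lambda>_. N"
    using psf_N[OF prob_N[OF f_meas f_prob]] N_def by simp
  have I: "insert i ({..<n} - {i}) = {..<n}" using i by auto
  have S': "S \<in> sets (PiM (insert i ({..<n} - {i})) (\<lambda>_. N))" using S I N_def by simp
  have "emeasure (PiM {..<n} (\<lambda>_. N)) S = (\<integral>\<^sup>+ z. indicator S z \<partial>PiM {..<n} (\<lambda>_. N))"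
    using S N_def by simp
  also have "\<dots> = (\<integral>\<^sup>+ z. indicator S z \<partial>PiM (insert i ({..<n} - {i})) (\<lambda>_. N))"
    using I by simp
  also have "\<dots> = (\<integral>\<^sup>+ x. (\<integral>\<^sup>+ y. indicator S (x(i := y)) \<partial>N) \<partial>PiM ({..<n} - {i}) (\<lambda>_. N))"
    by (rule product_nn_integral_insert) (use S' in auto)
  also have "\<dots> = (\<integral>\<^sup>+ x. 0 \<partial>PiM ({..<n} - {i}) (\<lambda>_. N))"
  proof (rule nn_integral_cong)
    fix x assume x: "x \<in> space (PiM ({..<n} - {i}) (\<lambda>_. N))"
    define C where "C = {y. x(i:=y) \<in> S}"
    have cC: "countable C" using cnt x N_def C_def by simp
    have null: "C \<in> null_sets lborel" by (rule countable_imp_null_set_lborel[OF cC])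
    have ae: "AE y in lborel. y \<in> C \<longrightarrow> ennreal (f y) = 0"
      using AE_not_in[OF null] by eventually_elim auto
    have CN: "C \<in> null_sets N" unfolding N_def using null f_meas ae
      by (subst null_sets_density_iff) auto
    have "(\<integral>\<^sup>+ y. indicator S (x(i := y)) \<partial>N) = (\<integral>\<^sup>+ y. indicator C y \<partial>N)"
      by (intro nn_integral_cong) (simp add: C_def indicator_def)
    also have "\<dots> = emeasure N C" using CN by (intro nn_integral_indicator) auto
    also have "\<dots> = 0" using CN by auto
    finally show "(\<integral>\<^sup>+ y. indicator S (x(i := y)) \<partial>N) = 0" .
  qed
  finally show ?thesis using N_def by simp
qed



definition Dset :: "nat \<Rightarrow> ((nat \<Rightarrow> real) \<times> (nat \<Rightarrow> real)) set" where
  "Dset J = {p \<in> param_space J. (\<forall>j. fst p j \<in> \<rat>) \<and> (\<forall>j. snd p j \<in> \<rat>)}"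

lemma countable_Dset: "countable (Dset J)"
proof -
  define R where "R = {g :: nat \<Rightarrow> real. (\<forall>j. g j \<in> \<rat>) \<and> (\<forall>j\<ge>J. g j = 0)}"
  have "R \<subseteq> (\<lambda>h j. if j < J then h j else 0) ` (PiE {..<J} (\<lambda>_. \<rat>))"
  proof
    fix g assume g: "g \<in> R"
    have "g = (\<lambda>j. if j < J then restrict g {..<J} j else 0)"
      using g unfolding R_def by (auto simp: fun_eq_iff)
    moreover have "restrict g {..<J} \<in> PiE {..<J} (\<lambda>_. \<rat>)" using g unfolding R_def by auto
    ultimately show "g \<in> (\<lambda>h j. if j < J then h j else 0) ` (PiE {..<J} (\<lambda>_. \<rat>))" by blast
  qed
  moreover have "countable (PiE {..<J} (\<lambda>_. \<rat> :: real set))"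
    by (intro countable_PiE) (auto simp: Rats_def)
  ultimately have cR: "countable R" by (meson countable_image countable_subset)
  have "Dset J \<subseteq> R \<times> R" unfolding Dset_def R_def param_space_def by auto
  moreover have "countable (R \<times> R)" using cR by (intro countable_SIGMA) auto
  ultimately show ?thesis by (rule countable_subset)
qed

lemma Lf_tendsto:
  assumes P: "(t, m) \<in> param_space J"
    and T: "\<And>j. j < J \<Longrightarrow> (\<lambda>k. T k j) \<longlonglongrightarrow> t j"
    and M: "\<And>j. j < J \<Longrightarrow> (\<lambda>k. M k j) \<longlonglongrightarrow> m j"
  shows "(\<lambda>k. Lf n J (T k) (M k) z) \<longlonglongrightarrow> Lf n J t m z"
  unfolding Lf_def
proof (intro tendsto_sum tendsto_ln)
  fix i
  show "(\<lambda>k. Af J (T k) (M k) (z i)) \<longlonglongrightarrow> Af J t m (z i)"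
    unfolding Af_def using T M by (intro tendsto_sum tendsto_intros) auto
  show "Af J t m (z i) \<noteq> 0" using Af_pos[OF P] by (metis less_irrefl)
qed

lemma approx:
  assumes P: "(t, m) \<in> param_space J"
  shows "\<exists>T M. (\<forall>k. (T k, M k) \<in> Dset J) \<and> (\<forall>j<J. (\<lambda>k. T k j) \<longlonglongrightarrow> t j) \<and> (\<forall>j<J. (\<lambda>k. M k j) \<longlonglongrightarrow> m j)"
proof -
  have ex: "\<exists>r. r \<in> \<rat> \<and> a < r \<and> r < a + inverse (real (Suc k))" for a :: real and k
  proof -
    have "a < a + inverse (real (Suc k))" by simp
    then show ?thesis using Rats_dense_in_real by blast
  qed
  define rr where "rr a k = (SOME r. r \<in> \<rat> \<and> a < r \<and> r < a + inverse (real (Suc k)))" for a k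
  have rr: "rr a k \<in> \<rat>" "a < rr a k" "rr a k < a + inverse (real (Suc k))" for a k
    using someI_ex[OF ex[of a k]] unfolding rr_def by auto
  have rrlim: "(\<lambda>k. rr a k) \<longlonglongrightarrow> a" for a
  proof (rule tendsto_sandwich[of "\<lambda>k. a" _ _ "\<lambda>k. a + inverse (real (Suc k))"])
    show "\<forall>\<^sub>F k in sequentially. a \<le> rr a k" using rr(2) by (simp add: less_imp_le)
    show "\<forall>\<^sub>F k in sequentially. rr a k \<le> a + inverse (real (Suc k))" using rr(3) by (simp add: less_imp_le)
    show "(\<lambda>k. a) \<longlonglongrightarrow> a" by simp
    show "(\<lambda>k. a + inverse (real (Suc k))) \<longlonglongrightarrow> a"
      using tendsto_add[OF tendsto_const LIMSEQ_inverse_real_of_nat, of a] by simp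
  qed
  have tpos: "\<And>j. j < J \<Longrightarrow> 0 < t j" and tsum: "(\<Sum>j<J. t j) = 1"
    using P by (auto simp: param_space_def)
  have J0: "0 < J" using param_J_pos[OF P] .
  define S where "S k = (\<Sum>l<J. rr (t l) k)" for k
  have Spos: "0 < S k" for k unfolding S_def
    using J0 tpos rr(2) by (intro sum_pos) (auto intro: less_trans)
  define T where "T k j = (if j < J then rr (t j) k / S k else 0)" for k j
  define M where "M k j = (if j < J then rr (m j) k else 0)" for k j
  have "(T k, M k) \<in> Dset J" for k
  proof -
    have "T k j > 0" if "j < J" for j
      using that Spos[of k] tpos[OF that] rr(2)[of "t j" k] by (simp add: T_def)
    moreover have "(\<Sum>j<J. T k j) = 1"
      using Spos[of k] by (simp add: T_def S_def sum_divide_distrib[symmetric])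
    moreover have "\<forall>j. T k j \<in> \<rat>" "\<forall>j. M k j \<in> \<rat>"
      unfolding T_def M_def S_def using rr(1) by (auto intro!: Rats_divide Rats_sum)
    ultimately show ?thesis unfolding Dset_def param_space_def by (auto simp: T_def M_def)
  qed
  moreover have "(\<lambda>k. T k j) \<longlonglongrightarrow> t j" if "j < J" for j
  proof -
    have "(\<lambda>k. \<Sum>l<J. rr (t l) k) \<longlonglongrightarrow> (\<Sum>l<J. t l)"
      by (intro tendsto_sum rrlim)
    then have Slim: "S \<longlonglongrightarrow> 1" unfolding S_def using tsum by simp
    have "(\<lambda>k. rr (t j) k / S k) \<longlonglongrightarrow> t j / 1" by (intro tendsto_divide rrlim Slim) auto
    then show ?thesis using that by (simp add: T_def)
  qed
  moreover have "(\<lambda>k. M k j) \<longlonglongrightarrow> m j" if "j < J" for j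
    using that rrlim by (simp add: M_def)
  ultimately show ?thesis by blast
qed

lemma param_ne: "0 < J \<Longrightarrow> param_space J \<noteq> {}"
proof -
  assume J: "0 < J"
  have "((\<lambda>j. if j < J then 1 / real J else 0), (\<lambda>_. 0)) \<in> param_space J"
    using J by (auto simp: param_space_def)
  then show ?thesis by blast
qed

lemma bdd_D: "bdd_above ((\<lambda>p. Lf n J (fst p) (snd p) z) ` Dset J)"
  by (rule bdd_aboveI[of _ "\<Sum>i<n. (z i)\<^sup>2 / 2"]) (auto simp: Dset_def intro: Lf_le)

lemma W_eq_D: assumes J: "0 < J" shows "Wf n J z = (SUP p\<in>Dset J. Lf n J (fst p) (snd p) z)"
proof (rule antisym)
  obtain t0 m0 where P0: "(t0, m0) \<in> param_space J" using param_ne[OF J] by auto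
  then obtain T0 M0 where "\<forall>k. (T0 k, M0 k) \<in> Dset J" using approx by blast
  then have Dne: "Dset J \<noteq> {}" by blast
  show "Wf n J z \<le> (SUP p\<in>Dset J. Lf n J (fst p) (snd p) z)"
  proof (rule W_le[OF param_ne[OF J]])
    fix t m assume P: "(t, m) \<in> param_space J"
    obtain T M where TM: "\<forall>k. (T k, M k) \<in> Dset J" "\<forall>j<J. (\<lambda>k. T k j) \<longlonglongrightarrow> t j"
      "\<forall>j<J. (\<lambda>k. M k j) \<longlonglongrightarrow> m j" using approx[OF P] by blast
    have lim: "(\<lambda>k. Lf n J (T k) (M k) z) \<longlonglongrightarrow> Lf n J t m z"
      using TM by (intro Lf_tendsto[OF P]) auto
    have "Lf n J (T k) (M k) z \<le> (SUP p\<in>Dset J. Lf n J (fst p) (snd p) z)" for k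
      using cSUP_upper[OF TM(1)[rule_format, of k] bdd_D] by simp
    then show "Lf n J t m z \<le> (SUP p\<in>Dset J. Lf n J (fst p) (snd p) z)"
      by (intro LIMSEQ_le_const2[OF lim]) auto
  qed
  show "(SUP p\<in>Dset J. Lf n J (fst p) (snd p) z) \<le> Wf n J z"
    using Dne by (intro cSUP_least) (auto simp: Dset_def intro: Lf_le_W)
qed



lemma Lf_meas_upd:
  "(\<lambda>z. Lf n J t m (z(i:=c))) \<in> borel_measurable (PiM {..<n} (\<lambda>_. density lborel (\<lambda>x. ennreal (f x))))"
  unfolding Lf_def Af_def fun_upd_apply by measurable

lemma Lf_meas:
  "(\<lambda>z. Lf n J t m z) \<in> borel_measurable (PiM {..<n} (\<lambda>_. density lborel (\<lambda>x. ennreal (f x))))"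
  unfolding Lf_def Af_def by measurable

lemma Wf_meas_upd: assumes J: "0 < J"
  shows "(\<lambda>z. Wf n J (z(i:=c))) \<in> borel_measurable (PiM {..<n} (\<lambda>_. density lborel (\<lambda>x. ennreal (f x))))"
  unfolding W_eq_D[OF J]
  by (rule borel_measurable_cSUP[OF countable_Dset]) (auto intro: Lf_meas_upd bdd_D)

lemma Wf_meas: assumes J: "0 < J"
  shows "(\<lambda>z. Wf n J z) \<in> borel_measurable (PiM {..<n} (\<lambda>_. density lborel (\<lambda>x. ennreal (f x))))"
  unfolding W_eq_D[OF J]
  by (rule borel_measurable_cSUP[OF countable_Dset]) (auto intro: Lf_meas bdd_D)

lemma comp_meas: assumes "i < n"
  shows "(\<lambda>z. z i) \<in> borel_measurable (PiM {..<n} (\<lambda>_. density lborel (\<lambda>x. ennreal (f x))))"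
proof -
  have "(\<lambda>z. z i) \<in> measurable (PiM {..<n} (\<lambda>_. density lborel (\<lambda>x. ennreal (f x)))) (density lborel (\<lambda>x. ennreal (f x)))"
    using assms by (intro measurable_component_singleton) auto
  then show ?thesis by simp
qed

lemma pred_constP: "Measurable.pred M (\<lambda>x. P)"
  by (cases P) (auto simp: pred_def)

lemma Mi_meas: assumes J: "0 < J" and i: "i < n"
  shows "Measurable.pred (PiM {..<n} (\<lambda>_. density lborel (\<lambda>x. ennreal (f x)))) (Mi n J i)"
proof -
  let ?M = "PiM {..<n} (\<lambda>_. density lborel (\<lambda>x. ennreal (f x)))"
  have h: "Measurable.pred ?M (\<lambda>z. Wf n J z + a * (c - z i) \<le> Wf n J (z(i:=c)))" for a c
  proof -
    have f1: "(\<lambda>z. Wf n J z + a * (c - z i)) \<in> borel_measurable ?M"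
      using Wf_meas[OF J] comp_meas[OF i]
      by (intro borel_measurable_add borel_measurable_times borel_measurable_diff borel_measurable_const) auto
    show ?thesis unfolding pred_def by (rule borel_measurable_le[OF f1 Wf_meas_upd[OF J]])
  qed
  show ?thesis unfolding Mi_def
    by (intro pred_intros_countable pred_intros_logic h pred_constP)
qed



lemma det:
  assumes A: "\<forall>i\<in>{..<n}. \<not> Mi n J i z"
    and B: "\<forall>p\<in>{..<n}\<times>{..<n}. fst p \<noteq> snd p \<longrightarrow> z (fst p) \<noteq> z (snd p)"
    and JJ: "J * J \<le> n"
  shows "\<forall>tau mu. (tau, mu) \<in> global_minimizers n J z \<longrightarrow>
             global_minimizers n J z =
               {(s, v) \<in> param_space J. \<forall>k<J.
                  (\<Sum>j<J. s j * (if v j = mu k then 1 else 0)) =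
                  (\<Sum>j<J. tau j * (if mu j = mu k then 1 else 0))}"
proof (intro allI impI)
  fix tau mu assume m1: "(tau, mu) \<in> global_minimizers n J z"
  have P1: "(tau, mu) \<in> param_space J" using m1 minimizer_iff by blast
  show "global_minimizers n J z =
               {(s, v) \<in> param_space J. \<forall>k<J.
                  (\<Sum>j<J. s j * (if v j = mu k then 1 else 0)) =
                  (\<Sum>j<J. tau j * (if mu j = mu k then 1 else 0))}"
  proof (intro equalityI subsetI)
    fix p assume "p \<in> global_minimizers n J z"
    then obtain s v where pv: "p = (s, v)" and m2: "(s, v) \<in> global_minimizers n J z"
      by (cases p) auto
    have P2: "(s, v) \<in> param_space J" using m2 minimizer_iff by blast
    define Z where "Z = z ` {..<n}"
    have inj: "inj_on z {..<n}"
    proof (rule inj_onI)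
      fix a b assume ab: "a \<in> {..<n}" "b \<in> {..<n}" "z a = z b"
      show "a = b" using B[rule_format, of "(a, b)"] ab by auto
    qed
    have cZ: "card Z = n" unfolding Z_def using card_image[OF inj] by simp
    have eq: "Ad J tau mu x * Af J s v x = Af J tau mu x * Ad J s v x" if xZ: "x \<in> Z" for x
    proof -
      obtain i where i: "i < n" "x = z i" using xZ Z_def by auto
      have "Ad J tau mu (z i) / Af J tau mu (z i) = Ad J s v (z i) / Af J s v (z i)"
        using kink[OF m1 m2 i(1)] A i(1) by blast
      then show ?thesis using Af_pos[OF P1, of x] Af_pos[OF P2, of x] i(2)
        by (simp add: field_simps)
    qed
    have ms: "mass J s v b = mass J tau mu b" for b
      by (rule identify[OF P1 P2 _ _ eq]) (use cZ JJ Z_def in auto)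
    show "p \<in> {(s, v) \<in> param_space J. \<forall>k<J.
                  (\<Sum>j<J. s j * (if v j = mu k then 1 else 0)) =
                  (\<Sum>j<J. tau j * (if mu j = mu k then 1 else 0))}"
      using P2 ms unfolding pv mass_def by simp
  next
    fix p assume "p \<in> {(s, v) \<in> param_space J. \<forall>k<J.
                  (\<Sum>j<J. s j * (if v j = mu k then 1 else 0)) =
                  (\<Sum>j<J. tau j * (if mu j = mu k then 1 else 0))}"
    then obtain s v where pv: "p = (s, v)" and P2: "(s, v) \<in> param_space J"
      and h: "\<forall>k<J. (\<Sum>j<J. s j * (if v j = mu k then 1 else 0)) =
                  (\<Sum>j<J. tau j * (if mu j = mu k then 1 else 0))"
      by (cases p) auto
    have "\<forall>k<J. mass J s v (mu k) = mass J tau mu (mu k)" using h unfolding mass_def by simp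
    then show "p \<in> global_minimizers n J z" using supset[OF m1 P2] pv by simp
  qed
qed

theorem corollary1:
  fixes f :: "real \<Rightarrow> real" and n J :: nat
  assumes f_meas: "f \<in> borel_measurable lborel"
    and f_nonneg: "\<And>x. 0 \<le> f x"
    and f_prob: "(\<integral>\<^sup>+ x. ennreal (f x) \<partial>lborel) = 1"
    and J_le: "real J \<le> sqrt (real n)"
  shows "AE z in PiM {..<n} (\<lambda>_. density lborel (\<lambda>x. ennreal (f x))).
           \<forall>tau mu. (tau, mu) \<in> global_minimizers n J z \<longrightarrow>
             global_minimizers n J z =
               {(s, v) \<in> param_space J. \<forall>k<J.
                  (\<Sum>j<J. s j * (if v j = mu k then 1 else 0)) =
                  (\<Sum>j<J. tau j * (if mu j = mu k then 1 else 0))}"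
proof (cases "J = 0")
  case True
  have "param_space J = {}" using True by (auto simp: param_space_def)
  then have "\<And>z. global_minimizers n J z = {}" by (auto simp: global_minimizers_def)
  then show ?thesis by simp
next
  case False
  then have J: "0 < J" by simp
  let ?N = "density lborel (\<lambda>x. ennreal (f x))"
  let ?M = "PiM {..<n} (\<lambda>_. ?N)"
  have JJ: "J * J \<le> n"
  proof -
    have "real J * real J \<le> sqrt (real n) * sqrt (real n)" using J_le by (intro mult_mono) auto
    then have "real (J * J) \<le> real n" by simp
    then show ?thesis by (simp only: of_nat_le_iff)
  qed
  have ae1: "AE z in ?M. \<not> Mi n J i z" if i: "i \<in> {..<n}" for i
  proof -
    have i': "i < n" using i by simp
    have S: "{z \<in> space ?M. Mi n J i z} \<in> sets ?M" using Mi_meas[OF J i'] by (simp add: pred_def)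
    have "emeasure ?M {z \<in> space ?M. Mi n J i z} = 0"
    proof (rule null_slices[OF f_meas f_prob S i'])
      fix x assume x: "x \<in> space (PiM ({..<n}-{i}) (\<lambda>_. ?N))"
      have sub: "{y. x(i:=y) \<in> {z \<in> space ?M. Mi n J i z}} \<subseteq> {y. Mi n J i (x(i:=y))}" by auto
      show "countable {y. x(i:=y) \<in> {z \<in> space ?M. Mi n J i z}}"
        by (rule countable_subset[OF sub slice_countable[OF i' param_ne[OF J], of x]])
    qed
    then show ?thesis using AE_iff_measurable[OF S, of "\<lambda>z. \<not> Mi n J i z"] by simp
  qed
  have ae2: "AE z in ?M. fst p \<noteq> snd p \<longrightarrow> z (fst p) \<noteq> z (snd p)" if p: "p \<in> {..<n}\<times>{..<n}" for p
  proof (cases "fst p = snd p")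
    case True then show ?thesis by simp
  next
    case False
    define i where "i = fst p"
    define j where "j = snd p"
    have ij: "i < n" "j < n" "i \<noteq> j" using p False i_def j_def by auto
    have S: "{z \<in> space ?M. z i = z j} \<in> sets ?M"
      using comp_meas[OF ij(1)] comp_meas[OF ij(2)] by (rule borel_measurable_eq)
    have "emeasure ?M {z \<in> space ?M. z i = z j} = 0"
    proof (rule null_slices[OF f_meas f_prob S ij(1)])
      fix x assume x: "x \<in> space (PiM ({..<n}-{i}) (\<lambda>_. ?N))"
      have sub: "{y. x(i:=y) \<in> {z \<in> space ?M. z i = z j}} \<subseteq> {x j}" using ij by auto
      show "countable {y. x(i:=y) \<in> {z \<in> space ?M. z i = z j}}"
        by (rule countable_subset[OF sub]) simp
    qed
    then have "AE z in ?M. z i \<noteq> z j" using AE_iff_measurable[OF S, of "\<lambda>z. z i \<noteq> z j"] by simp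
    then show ?thesis unfolding i_def j_def by simp
  qed
  have A1: "AE z in ?M. \<forall>i\<in>{..<n}. \<not> Mi n J i z"
    by (rule AE_ball_countable'[OF ae1]) auto
  have A2: "AE z in ?M. \<forall>p\<in>{..<n}\<times>{..<n}. fst p \<noteq> snd p \<longrightarrow> z (fst p) \<noteq> z (snd p)"
    by (rule AE_ball_countable'[OF ae2]) auto
  show ?thesis using A1 A2
  proof eventually_elim
    case (elim z)
    then show ?case by (intro det[OF _ _ JJ]) auto
  qed
qed


end
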